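(* Let $(G,x,y)$ be an $n$-isobicyclic triple, written as a semidirect product $G=T\rtimes S$, $x=x_Sx_T$, $y=y_Sy_T$ of the standard $t$-isobicyclic triple $(T,x_T,y_T)$ by an $s$-isobicyclic triple $(S,x_S,y_S)$ via a diagonal action with eigenvalue $\lambda$ as in Theorem 4.1, where the decomposition is canonical, i.e. $T\cap Z(G)=1$. Then the order of $xy$ in $G$ equals the order of $x_Sy_S$ in $S$.
   Context: $(G,x,y)$ is $n$-isobicyclic if $\langle x\rangle,\langle y\rangle$ are cyclic of order $n$, $G=\langle x\rangle\langle y\rangle$, $\langle x\rangle\cap\langle y\rangle=1$, and some automorphism transposes $x,y$. The standard $t$-triple is $(C_t\times C_t,x_T,y_T)$ with $x_T,y_T$ a basis. The semidirect product with eigenvalue $\lambda\in\mathbb Z_t^*$ ($\gcd(s,t)=1$): $x_S$ acts by conjugation fixing $x_T$ and sending $y_T\mapsto y_T^\lambda$, $y_S$ sends $x_T\mapsto x_T^\lambda$ and fixes $y_T$. Every $n$-isobicyclic triple has such a decomposition with $S$ a cartesian (direct) product of prime-power isobicyclic triples, and there is a unique one with $t$ minimal, characterised by $T\cap Z(G)=1$ ($Z(G)$ the centre). *)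

theory Defs
  imports "HOL-Algebra.Algebra"
begin

definition center :: "('a, 'b) monoid_scheme \<Rightarrow> 'a set" where
  "center G = {z \<in> carrier G. \<forall>g \<in> carrier G. z \<otimes>\<^bsub>G\<^esub> g = g \<otimes>\<^bsub>G\<^esub> z}"

definition isobicyclic :: "('a, 'b) monoid_scheme \<Rightarrow> 'a \<Rightarrow> 'a \<Rightarrow> nat \<Rightarrow> bool" where
  "isobicyclic G x y n \<longleftrightarrow>
     group G \<and> x \<in> carrier G \<and> y \<in> carrier G \<and> 0 < n \<and>
     group.ord G x = n \<and> group.ord G y = n \<and>
     carrier G = generate G {x} <#>\<^bsub>G\<^esub> generate G {y} \<and>
     generate G {x} \<inter> generate G {y} = {\<one>\<^bsub>G\<^esub>} \<and>
     (\<exists>\<phi>. \<phi> \<in> iso G G \<and> \<phi> x = y \<and> \<phi> y = x)"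

definition standard_triple :: "('a, 'b) monoid_scheme \<Rightarrow> 'a \<Rightarrow> 'a \<Rightarrow> nat \<Rightarrow> bool" where
  "standard_triple T xT yT t \<longleftrightarrow> 0 < t \<and>
     (\<exists>\<phi>. \<phi> \<in> iso (integer_mod_group t \<times>\<times> integer_mod_group t) T \<and>
          \<phi> (1 mod int t, 0) = xT \<and> \<phi> (0, 1 mod int t) = yT)"

end

theory Submission
  imports Defs
begin

lemma (in group) inv_canc_l: "c \<in> carrier G \<Longrightarrow> w \<in> carrier G \<Longrightarrow> inv c \<otimes> (c \<otimes> w) = w"
  by (simp add: m_assoc[symmetric])

lemma (in group) conj_pow:
  assumes "c \<in> carrier G" "u \<in> carrier G"
  shows "c \<otimes> u [^] (k::nat) \<otimes> inv c = (c \<otimes> u \<otimes> inv c) [^] k"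
proof (induction k)
  case 0 then show ?case using assms by simp
next
  case (Suc k)
  have "c \<otimes> u [^] Suc k \<otimes> inv c = (c \<otimes> u [^] k \<otimes> inv c) \<otimes> (c \<otimes> u \<otimes> inv c)"
    using assms by (simp add: m_assoc inv_canc_l)
  also have "\<dots> = (c \<otimes> u \<otimes> inv c) [^] Suc k" using Suc by simp
  finally show ?case .
qed

lemma (in group) conj_mult:
  assumes "c \<in> carrier G" "u \<in> carrier G" "v \<in> carrier G"
  shows "c \<otimes> (u \<otimes> v) \<otimes> inv c = (c \<otimes> u \<otimes> inv c) \<otimes> (c \<otimes> v \<otimes> inv c)"
  using assms by (simp add: m_assoc inv_canc_l)

lemma sum_pow_rec1: "(\<Sum>i<Suc k. (l::nat) ^ i) = 1 + l * (\<Sum>i<k. l ^ i)"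
  by (simp add: sum.lessThan_Suc_shift sum_distrib_left del: sum.lessThan_Suc)

lemma sum_pow_rec2: "l * (\<Sum>i<k. (l::nat) ^ i) + 1 = (\<Sum>i<k. l ^ i) + l ^ k"
  using sum_pow_rec1[of l k] by simp

lemma (in group) sub_pow_closed:
  assumes "subgroup H G" "u \<in> H" shows "u [^] (k::nat) \<in> H"
  by (induction k) (use assms in \<open>auto intro: subgroup.m_closed subgroup.one_closed\<close>)

lemma (in group) conj_iter:
  assumes "g \<in> carrier G" "u \<in> carrier G" "g \<otimes> u \<otimes> inv g = u [^] (l::nat)"
  shows "g [^] (k::nat) \<otimes> u \<otimes> inv (g [^] k) = u [^] (l ^ k)"
proof (induction k)
  case 0 then show ?case using assms by simp
next
  case (Suc k)
  have "g [^] Suc k \<otimes> u \<otimes> inv (g [^] Suc k) = g \<otimes> (g [^] k \<otimes> u \<otimes> inv (g [^] k)) \<otimes> inv g"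
  proof -
    have e: "g [^] Suc k = g \<otimes> g [^] k" using assms(1) by (rule nat_pow_Suc2)
    show ?thesis unfolding e using assms by (simp add: inv_mult_group m_assoc)
  qed
  also have "\<dots> = g \<otimes> u [^] (l ^ k) \<otimes> inv g" using Suc by simp
  also have "\<dots> = (u [^] l) [^] (l ^ k)" using assms conj_pow by simp
  also have "\<dots> = u [^] (l ^ Suc k)" using assms by (simp add: nat_pow_pow)
  finally show ?case .
qed

lemma (in group) fix_pow:
  assumes "u \<in> carrier G" "u [^] (l ^ k) = u"
  shows "u [^] (l * (\<Sum>i<k. (l::nat) ^ i)) = u [^] (\<Sum>i<k. l ^ i)"
proof -
  have "u [^] (l * (\<Sum>i<k. l ^ i)) \<otimes> u = u [^] (l * (\<Sum>i<k. l ^ i) + 1)"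
    using assms by (simp add: nat_pow_mult[symmetric])
  also have "\<dots> = u [^] ((\<Sum>i<k. l ^ i) + l ^ k)" by (simp only: sum_pow_rec2)
  also have "\<dots> = u [^] (\<Sum>i<k. l ^ i) \<otimes> u" using assms by (simp add: nat_pow_mult[symmetric])
  finally show ?thesis using assms by simp
qed

lemma (in group) main9:
  fixes T S :: "'a set"
    and x y xT yT xS yS :: 'a
    and n s t lam :: nat
  assumes iso_G: "isobicyclic G x y n"
    and T_normal: "T \<lhd> G"
    and S_sub: "subgroup S G"
    and TS_meet: "T \<inter> S = {\<one>\<^bsub>G\<^esub>}"
    and TS_prod: "T <#>\<^bsub>G\<^esub> S = carrier G"
    and T_std: "standard_triple (G\<lparr>carrier := T\<rparr>) xT yT t"
    and S_iso: "isobicyclic (G\<lparr>carrier := S\<rparr>) xS yS s"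
    and st_coprime: "coprime s t"
    and lam_unit: "coprime lam t"
    and act_xS_xT: "xS \<otimes>\<^bsub>G\<^esub> xT \<otimes>\<^bsub>G\<^esub> inv\<^bsub>G\<^esub> xS = xT"
    and act_xS_yT: "xS \<otimes>\<^bsub>G\<^esub> yT \<otimes>\<^bsub>G\<^esub> inv\<^bsub>G\<^esub> xS = yT [^]\<^bsub>G\<^esub> lam"
    and act_yS_xT: "yS \<otimes>\<^bsub>G\<^esub> xT \<otimes>\<^bsub>G\<^esub> inv\<^bsub>G\<^esub> yS = xT [^]\<^bsub>G\<^esub> lam"
    and act_yS_yT: "yS \<otimes>\<^bsub>G\<^esub> yT \<otimes>\<^bsub>G\<^esub> inv\<^bsub>G\<^esub> yS = yT"
    and x_decomp: "x = xS \<otimes>\<^bsub>G\<^esub> xT"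
    and y_decomp: "y = yS \<otimes>\<^bsub>G\<^esub> yT"
    and canonical: "T \<inter> center G = {\<one>\<^bsub>G\<^esub>}"
  shows "group.ord G (x \<otimes>\<^bsub>G\<^esub> y) = group.ord (G\<lparr>carrier := S\<rparr>) (xS \<otimes>\<^bsub>G\<^esub> yS)"
proof -
  have Tsub: "subgroup T G" using T_normal by (simp add: normal_def)
  have TG: "T \<subseteq> carrier G" using Tsub subgroup.subset by blast
  have SG: "S \<subseteq> carrier G" using S_sub subgroup.subset by blast
  have Sgrp: "group (G\<lparr>carrier := S\<rparr>)" and xSS: "xS \<in> S" and ySS: "yS \<in> S"
    and Sgen: "S = generate (G\<lparr>carrier := S\<rparr>) {xS} <#>\<^bsub>G\<lparr>carrier := S\<rparr>\<^esub> generate (G\<lparr>carrier := S\<rparr>) {yS}"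
    using S_iso unfolding isobicyclic_def by auto
  obtain t0 :: nat and phi where tpos: "0 < t0"
    and phi: "phi \<in> iso (integer_mod_group t0 \<times>\<times> integer_mod_group t0) (G\<lparr>carrier := T\<rparr>)"
    and phx: "phi (1 mod int t0, 0) = xT" and phy: "phi (0, 1 mod int t0) = yT"
    using T_std unfolding standard_triple_def by blast
  let ?D = "integer_mod_group t0 \<times>\<times> integer_mod_group t0"
  have bij: "bij_betw phi (carrier ?D) T" using phi unfolding iso_def by simp
  have hom: "\<And>a b. a \<in> carrier ?D \<Longrightarrow> b \<in> carrier ?D \<Longrightarrow> phi (a \<otimes>\<^bsub>?D\<^esub> b) = phi a \<otimes> phi b"
  proof -
    fix a b assume "a \<in> carrier ?D" "b \<in> carrier ?D"
    moreover have "phi \<in> hom ?D (G\<lparr>carrier := T\<rparr>)" using phi by (simp add: iso_def)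
    ultimately show "phi (a \<otimes>\<^bsub>?D\<^esub> b) = phi a \<otimes> phi b" using hom_mult by fastforce
  qed
  have comm: "\<And>u v. u \<in> T \<Longrightarrow> v \<in> T \<Longrightarrow> u \<otimes> v = v \<otimes> u"
  proof -
    fix u v assume "u \<in> T" "v \<in> T"
    then obtain a b where a: "a \<in> carrier ?D" "u = phi a" and b: "b \<in> carrier ?D" "v = phi b"
      using bij unfolding bij_betw_def by blast
    have "a \<otimes>\<^bsub>?D\<^esub> b = b \<otimes>\<^bsub>?D\<^esub> a"
      by (cases a; cases b) (simp add: DirProd_def add.commute)
    then show "u \<otimes> v = v \<otimes> u" using hom a b by metis
  qed
  have xTT: "xT \<in> T" and yTT: "yT \<in> T"
  proof -
    have "(1 mod int t0, 0) \<in> carrier ?D" "(0, 1 mod int t0) \<in> carrier ?D"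
      using tpos by (auto simp: DirProd_def carrier_integer_mod_group)
    then show "xT \<in> T" "yT \<in> T" using bij phx phy unfolding bij_betw_def by auto
  qed
  have xSG: "xS \<in> carrier G" and ySG: "yS \<in> carrier G" using xSS ySS SG by auto
  have xTG: "xT \<in> carrier G" and yTG: "yT \<in> carrier G" using xTT yTT TG by auto
  define g where "g = xS \<otimes> yS"
  define sig where "sig = xT \<otimes> yT [^] lam"
  define cc where "cc = (\<lambda>k::nat. \<Sum>i<k. lam ^ i)"
  have gS: "g \<in> S" unfolding g_def by (rule subgroup.m_closed[OF S_sub xSS ySS])
  have gG: "g \<in> carrier G" using gS SG by auto
  have sigT: "sig \<in> T" unfolding sig_def by (rule subgroup.m_closed[OF Tsub xTT sub_pow_closed[OF Tsub yTT]])
  have sigG: "sig \<in> carrier G" using sigT TG by auto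
  have h_eq: "x \<otimes> y = sig \<otimes> g"
  proof -
    have "sig \<otimes> g = (xS \<otimes> xT \<otimes> inv xS) \<otimes> (xS \<otimes> (yS \<otimes> yT \<otimes> inv yS) \<otimes> inv xS) \<otimes> (xS \<otimes> yS)"
      unfolding sig_def g_def by (simp only: act_xS_xT act_yS_yT act_xS_yT)
    also have "\<dots> = xS \<otimes> xT \<otimes> (yS \<otimes> yT)"
      using xSG ySG xTG yTG by (simp add: m_assoc inv_canc_l)
    finally show ?thesis using x_decomp y_decomp by simp
  qed
  have conj_g: "\<And>u. u \<in> carrier G \<Longrightarrow> g \<otimes> u \<otimes> inv g = xS \<otimes> (yS \<otimes> u \<otimes> inv yS) \<otimes> inv xS"
    unfolding g_def using xSG ySG by (simp add: m_assoc inv_mult_group)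
  have gx: "g \<otimes> xT \<otimes> inv g = xT [^] lam"
    using conj_g[OF xTG] act_yS_xT conj_pow[OF xSG xTG] act_xS_xT by simp
  have gy: "g \<otimes> yT \<otimes> inv g = yT [^] lam"
    using conj_g[OF yTG] act_yS_yT act_xS_yT by simp
  have gsig: "g \<otimes> sig \<otimes> inv g = sig [^] lam"
  proof -
    have "g \<otimes> sig \<otimes> inv g = xT [^] lam \<otimes> (yT [^] lam) [^] lam"
      unfolding sig_def using conj_mult[OF gG xTG] gx conj_pow[OF gG yTG] gy yTG by simp
    also have "\<dots> = sig [^] lam" unfolding sig_def
      using pow_mult_distrib[of xT "yT [^] lam" lam] comm xTT yTT Tsub sub_pow_closed xTG yTG by simp
    finally show ?thesis .
  qed
  have gsigc: "\<And>c. g \<otimes> sig [^] (c::nat) = sig [^] (lam * c) \<otimes> g"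
  proof -
    fix c :: nat
    have "g \<otimes> sig [^] c \<otimes> inv g = sig [^] (lam * c)"
      using conj_pow[OF gG sigG] gsig sigG by (simp add: nat_pow_pow)
    then have "g \<otimes> sig [^] c \<otimes> inv g \<otimes> g = sig [^] (lam * c) \<otimes> g" by simp
    then show "g \<otimes> sig [^] c = sig [^] (lam * c) \<otimes> g" using gG sigG by (simp add: m_assoc)
  qed
  have hpow: "\<And>k. (x \<otimes> y) [^] k = sig [^] (cc k) \<otimes> g [^] (k::nat)"
  proof -
    fix k :: nat show "(x \<otimes> y) [^] k = sig [^] (cc k) \<otimes> g [^] k"
    proof (induction k)
      case 0 then show ?case by (simp add: cc_def)
    next
      case (Suc k)
      have "(x \<otimes> y) [^] Suc k = sig \<otimes> g \<otimes> (sig [^] (cc k) \<otimes> g [^] k)"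
      proof -
        have "x \<otimes> y \<in> carrier G" using h_eq sigG gG by simp
        then have "(x \<otimes> y) [^] Suc k = (x \<otimes> y) \<otimes> (x \<otimes> y) [^] k" by (rule nat_pow_Suc2)
        then show ?thesis using Suc h_eq by simp
      qed
      also have "\<dots> = sig \<otimes> (g \<otimes> sig [^] (cc k)) \<otimes> g [^] k"
        using sigG gG by (simp add: m_assoc)
      also have "\<dots> = sig \<otimes> sig [^] (lam * cc k) \<otimes> (g \<otimes> g [^] k)"
        using sigG gG by (simp add: gsigc m_assoc)
      also have "\<dots> = sig [^] (cc (Suc k)) \<otimes> g [^] Suc k"
      proof -
        have e1: "cc (Suc k) = 1 + lam * cc k" unfolding cc_def by (rule sum_pow_rec1)
        have e2: "sig [^] (1 + lam * cc k) = sig \<otimes> sig [^] (lam * cc k)"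
          using nat_pow_mult[of sig 1 "lam * cc k"] sigG by simp
        show ?thesis unfolding e1 e2 nat_pow_Suc2[OF gG] ..
      qed
      finally show ?case .
    qed
  qed
  have gk_z: "\<And>k. g [^] (k::nat) = \<one> \<Longrightarrow> sig [^] (cc k) = \<one>"
  proof -
    fix k :: nat assume gk: "g [^] k = \<one>"
    have xfix: "xT [^] (lam ^ k) = xT"
      using conj_iter[OF gG xTG gx, of k] gk xTG by simp
    have yfix: "yT [^] (lam ^ k) = yT"
      using conj_iter[OF gG yTG gy, of k] gk yTG by simp
    define w where "w = yT [^] lam"
    have wT: "w \<in> T" unfolding w_def by (rule sub_pow_closed[OF Tsub yTT])
    have wG: "w \<in> carrier G" using wT TG by auto
    have wfix: "w [^] (lam ^ k) = w"
    proof -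
      have "w [^] (lam ^ k) = yT [^] (lam * lam ^ k)" unfolding w_def using yTG by (simp add: nat_pow_pow)
      also have "\<dots> = (yT [^] (lam ^ k)) [^] lam" using yTG by (simp add: nat_pow_pow mult.commute)
      finally show ?thesis using yfix w_def by simp
    qed
    define c where "c = cc k"
    have xc: "xT [^] (lam * c) = xT [^] c" unfolding c_def cc_def by (rule fix_pow[OF xTG xfix])
    have wc: "w [^] (lam * c) = w [^] c" unfolding c_def cc_def by (rule fix_pow[OF wG wfix])
    define z where "z = sig [^] c"
    have xTcT: "xT [^] c \<in> T" by (rule sub_pow_closed[OF Tsub xTT])
    have wcT: "w [^] c \<in> T" by (rule sub_pow_closed[OF Tsub wT])
    have zdec: "z = xT [^] c \<otimes> w [^] c"
      unfolding z_def sig_def w_def[symmetric] using pow_mult_distrib[OF comm[OF xTT wT] xTG wG] .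
    have zT: "z \<in> T" unfolding z_def by (rule sub_pow_closed[OF Tsub sigT])
    have zG: "z \<in> carrier G" using zT TG by auto
    have xSw: "xS \<otimes> w \<otimes> inv xS = w [^] lam"
      unfolding w_def using conj_pow[OF xSG yTG] act_xS_yT by simp
    have ySw: "yS \<otimes> w \<otimes> inv yS = w"
      unfolding w_def using conj_pow[OF ySG yTG] act_yS_yT by simp
    have cz_xS: "xS \<otimes> z \<otimes> inv xS = z"
    proof -
      have "xS \<otimes> z \<otimes> inv xS = (xS \<otimes> xT \<otimes> inv xS) [^] c \<otimes> (xS \<otimes> w \<otimes> inv xS) [^] c"
        unfolding zdec using conj_mult[OF xSG] conj_pow[OF xSG] xTG wG by simp
      also have "\<dots> = z" unfolding zdec act_xS_xT xSw using wG wc by (simp add: nat_pow_pow)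
      finally show ?thesis .
    qed
    have cz_yS: "yS \<otimes> z \<otimes> inv yS = z"
    proof -
      have "yS \<otimes> z \<otimes> inv yS = (yS \<otimes> xT \<otimes> inv yS) [^] c \<otimes> (yS \<otimes> w \<otimes> inv yS) [^] c"
        unfolding zdec using conj_mult[OF ySG] conj_pow[OF ySG] xTG wG by simp
      also have "\<dots> = z" unfolding zdec act_yS_xT ySw using xTG xc by (simp add: nat_pow_pow)
      finally show ?thesis .
    qed
    have commute_of_conj: "\<And>a. a \<in> carrier G \<Longrightarrow> a \<otimes> z \<otimes> inv a = z \<Longrightarrow> a \<otimes> z = z \<otimes> a"
    proof -
      fix a assume aG: "a \<in> carrier G" and e: "a \<otimes> z \<otimes> inv a = z"
      have "a \<otimes> z = a \<otimes> z \<otimes> inv a \<otimes> a" using aG zG by (simp add: m_assoc)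
      then show "a \<otimes> z = z \<otimes> a" using e by simp
    qed
    define C where "C = {a \<in> carrier G. a \<otimes> z = z \<otimes> a}"
    have Csub: "subgroup C G"
    proof (rule subgroupI)
      show "C \<subseteq> carrier G" unfolding C_def by auto
      show "C \<noteq> {}" unfolding C_def using zG by auto
    next
      fix a assume "a \<in> C"
      then have aG: "a \<in> carrier G" and e: "a \<otimes> z = z \<otimes> a" unfolding C_def by auto
      have "inv a \<otimes> z = inv a \<otimes> (z \<otimes> a) \<otimes> inv a" using aG zG by (simp add: m_assoc)
      also have "\<dots> = inv a \<otimes> (a \<otimes> z) \<otimes> inv a" using e by simp
      also have "\<dots> = z \<otimes> inv a" using aG zG by (simp add: inv_canc_l)
      finally show "inv a \<in> C" unfolding C_def using aG by simp
    next
      fix a b assume "a \<in> C" "b \<in> C"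
      then have aG: "a \<in> carrier G" and ea: "a \<otimes> z = z \<otimes> a"
        and bG: "b \<in> carrier G" and eb: "b \<otimes> z = z \<otimes> b" unfolding C_def by auto
      have "a \<otimes> b \<otimes> z = a \<otimes> (z \<otimes> b)" using aG bG zG eb by (simp add: m_assoc)
      also have "\<dots> = z \<otimes> (a \<otimes> b)" using aG bG zG ea by (simp add: m_assoc[symmetric])
      finally show "a \<otimes> b \<in> C" unfolding C_def using aG bG by simp
    qed
    have xSC: "xS \<in> C" unfolding C_def using xSG commute_of_conj[OF xSG cz_xS] by simp
    have ySC: "yS \<in> C" unfolding C_def using ySG commute_of_conj[OF ySG cz_yS] by simp
    have g1: "generate (G\<lparr>carrier := S\<rparr>) {xS} \<subseteq> C"
      using generate_consistent[of "{xS}" S] xSS S_sub generate_subgroup_incl[OF _ Csub, of "{xS}"] xSC by auto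
    have g2: "generate (G\<lparr>carrier := S\<rparr>) {yS} \<subseteq> C"
      using generate_consistent[of "{yS}" S] ySS S_sub generate_subgroup_incl[OF _ Csub, of "{yS}"] ySC by auto
    have SC: "S \<subseteq> C"
    proof
      fix a assume aS: "a \<in> S"
      have "a \<in> generate (G\<lparr>carrier := S\<rparr>) {xS} <#>\<^bsub>G\<lparr>carrier := S\<rparr>\<^esub> generate (G\<lparr>carrier := S\<rparr>) {yS}"
        using aS by (subst (asm) Sgen)
      then obtain a1 a2 where "a1 \<in> generate (G\<lparr>carrier := S\<rparr>) {xS}" "a2 \<in> generate (G\<lparr>carrier := S\<rparr>) {yS}"
        "a = a1 \<otimes> a2"
        unfolding set_mult_def by auto
      then show "a \<in> C" using g1 g2 subgroup.m_closed[OF Csub] by auto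
    qed
    have zcen: "z \<in> center G" unfolding center_def
    proof (intro CollectI conjI ballI)
      show "z \<in> carrier G" by (rule zG)
      fix a assume aG: "a \<in> carrier G"
      have "a \<in> T <#> S" using aG TS_prod by simp
      then obtain a1 a2 where a1: "a1 \<in> T" and a2: "a2 \<in> S" and a: "a = a1 \<otimes> a2"
        unfolding set_mult_def by auto
      have a1G: "a1 \<in> carrier G" and a2G: "a2 \<in> carrier G" using a1 a2 TG SG by auto
      have e2: "a2 \<otimes> z = z \<otimes> a2" using SC a2 unfolding C_def by auto
      have e1: "a1 \<otimes> z = z \<otimes> a1" using comm[OF a1 zT] .
      have "z \<otimes> (a1 \<otimes> a2) = a1 \<otimes> z \<otimes> a2" using e1 a1G a2G zG by (simp add: m_assoc[symmetric])
      also have "\<dots> = a1 \<otimes> a2 \<otimes> z" using e2 a1G a2G zG by (simp add: m_assoc)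
      finally show "z \<otimes> a = a \<otimes> z" using a by simp
    qed
    have "z \<in> T \<inter> center G" using zT zcen by blast
    then have "z = \<one>" using canonical by blast
    then show "sig [^] (cc k) = \<one>" using z_def c_def by simp
  qed
  have key: "\<And>k::nat. (x \<otimes> y) [^] k = \<one> \<longleftrightarrow> g [^] k = \<one>"
  proof
    fix k :: nat
    assume "g [^] k = \<one>"
    then show "(x \<otimes> y) [^] k = \<one>" using hpow gk_z by simp
  next
    fix k :: nat
    assume h1: "(x \<otimes> y) [^] k = \<one>"
    have sG: "sig [^] cc k \<in> carrier G" using sigG by simp
    have gkG: "g [^] k \<in> carrier G" using gG by simp
    have "g [^] k = inv (sig [^] cc k) \<otimes> (sig [^] cc k \<otimes> g [^] k)" using sG gkG by (simp add: inv_canc_l)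
    also have "\<dots> = inv (sig [^] cc k)" using h1 hpow[of k] sG by simp
    finally have "g [^] k = inv (sig [^] cc k)" .
    then have "g [^] k \<in> T" using subgroup.m_inv_closed[OF Tsub sub_pow_closed[OF Tsub sigT]] by simp
    moreover have "g [^] k \<in> S" by (rule sub_pow_closed[OF S_sub gS])
    ultimately show "g [^] k = \<one>" using TS_meet by auto
  qed
  have xyG: "x \<otimes> y \<in> carrier G" using h_eq sigG gG by simp
  have gSS: "g \<in> carrier (G\<lparr>carrier := S\<rparr>)" using gS by simp
  have keyS: "\<And>k::nat. (x \<otimes> y) [^] k = \<one> \<longleftrightarrow> group.ord (G\<lparr>carrier := S\<rparr>) g dvd k"
  proof -
    fix k :: nat
    have "g [^]\<^bsub>G\<lparr>carrier := S\<rparr>\<^esub> k = g [^] k" by (rule nat_pow_consistent[symmetric])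
    then show "(x \<otimes> y) [^] k = \<one> \<longleftrightarrow> group.ord (G\<lparr>carrier := S\<rparr>) g dvd k"
      using key[of k] group.pow_eq_id[OF Sgrp gSS, of k] by simp
  qed
  have "ord (x \<otimes> y) dvd group.ord (G\<lparr>carrier := S\<rparr>) g"
    using keyS[of "group.ord (G\<lparr>carrier := S\<rparr>) g"] pow_eq_id[OF xyG, of "group.ord (G\<lparr>carrier := S\<rparr>) g"] by simp
  moreover have "group.ord (G\<lparr>carrier := S\<rparr>) g dvd ord (x \<otimes> y)"
    using keyS[of "ord (x \<otimes> y)"] pow_eq_id[OF xyG, of "ord (x \<otimes> y)"] by simp
  ultimately show ?thesis unfolding g_def by (rule dvd_antisym)
qed

theorem lemma9p1:
  fixes G :: "('a, 'b) monoid_scheme"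
    and T S :: "'a set"
    and x y xT yT xS yS :: 'a
    and n s t lam :: nat
  assumes iso_G: "isobicyclic G x y n"
    and T_normal: "T \<lhd> G"
    and S_sub: "subgroup S G"
    and TS_meet: "T \<inter> S = {\<one>\<^bsub>G\<^esub>}"
    and TS_prod: "T <#>\<^bsub>G\<^esub> S = carrier G"
    and T_std: "standard_triple (G\<lparr>carrier := T\<rparr>) xT yT t"
    and S_iso: "isobicyclic (G\<lparr>carrier := S\<rparr>) xS yS s"
    and st_coprime: "coprime s t"
    and lam_unit: "coprime lam t"
    and act_xS_xT: "xS \<otimes>\<^bsub>G\<^esub> xT \<otimes>\<^bsub>G\<^esub> inv\<^bsub>G\<^esub> xS = xT"
    and act_xS_yT: "xS \<otimes>\<^bsub>G\<^esub> yT \<otimes>\<^bsub>G\<^esub> inv\<^bsub>G\<^esub> xS = yT [^]\<^bsub>G\<^esub> lam"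
    and act_yS_xT: "yS \<otimes>\<^bsub>G\<^esub> xT \<otimes>\<^bsub>G\<^esub> inv\<^bsub>G\<^esub> yS = xT [^]\<^bsub>G\<^esub> lam"
    and act_yS_yT: "yS \<otimes>\<^bsub>G\<^esub> yT \<otimes>\<^bsub>G\<^esub> inv\<^bsub>G\<^esub> yS = yT"
    and x_decomp: "x = xS \<otimes>\<^bsub>G\<^esub> xT"
    and y_decomp: "y = yS \<otimes>\<^bsub>G\<^esub> yT"
    and canonical: "T \<inter> center G = {\<one>\<^bsub>G\<^esub>}"
  shows "group.ord G (x \<otimes>\<^bsub>G\<^esub> y) = group.ord (G\<lparr>carrier := S\<rparr>) (xS \<otimes>\<^bsub>G\<^esub> yS)"
proof -
  have "group G" using iso_G unfolding isobicyclic_def by blast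
  then show ?thesis using group.main9[OF _ assms] by blast
qed

end
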